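(* Let $\mathcal{Q}$ be either the category of unital involutive quantales with unital involutive homomorphisms or the category of strong involutive quantales with strong involutive homomorphisms. Let $\{L_i\}_i$ be a family of locales such that all but at most one of the $L_i$ are regular. Then the coproduct $\coprod_i L_i$ in $\mathcal{Q}$ is calculated in the category of locales, i.e. it is a locale (and hence coincides with the coproduct in the category of locales).
   Context: A quantale is a complete lattice with an associative multiplication distributing over arbitrary joins in both variables; $1$ is its top. It is unital if it has a multiplicative unit, strong if $1\cdot 1=1$. An involutive quantale has an involution $^*$ with $a^{**}=a$, $(a\cdot b)^*=b^*\cdot a^*$, $(\bigvee a_i)^*=\bigvee a_i^*$. Homomorphisms preserve joins and multiplication; unital ones preserve the unit, strong ones the top, involutive ones the involution. A locale is a complete lattice satisfying $a\wedge\bigvee_i b_i=\bigvee_i(a\wedge b_i)$, regarded as a unital involutive quantale with multiplication $\wedge$, unit the top, trivial involution; locale homomorphisms preserve joins, finite meets and top. A locale $L$ is regular if every $a\in L$ equals $\bigvee\{a'\in L: a'\prec a\}$, where $a'\prec a$ means there is $b\in L$ with $a'\wedge b=0$ and $a\vee b=1$. *)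

theory Defs
  imports Main
begin

record 'a qt =
  qcar :: "'a set"
  qle  :: "'a \<Rightarrow> 'a \<Rightarrow> bool"
  qmul :: "'a \<Rightarrow> 'a \<Rightarrow> 'a"
  qone :: 'a
  qinv :: "'a \<Rightarrow> 'a"

definition is_lub :: "'a qt \<Rightarrow> 'a set \<Rightarrow> 'a \<Rightarrow> bool" where
  "is_lub Q A s \<longleftrightarrow> s \<in> qcar Q \<and> (\<forall>a\<in>A. qle Q a s) \<and>
     (\<forall>u\<in>qcar Q. (\<forall>a\<in>A. qle Q a u) \<longrightarrow> qle Q s u)"

definition is_glb :: "'a qt \<Rightarrow> 'a set \<Rightarrow> 'a \<Rightarrow> bool" where
  "is_glb Q A s \<longleftrightarrow> s \<in> qcar Q \<and> (\<forall>a\<in>A. qle Q s a) \<and>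
     (\<forall>u\<in>qcar Q. (\<forall>a\<in>A. qle Q u a) \<longrightarrow> qle Q u s)"

definition qSup :: "'a qt \<Rightarrow> 'a set \<Rightarrow> 'a" where
  "qSup Q A = (THE s. is_lub Q A s)"

definition qInf :: "'a qt \<Rightarrow> 'a set \<Rightarrow> 'a" where
  "qInf Q A = (THE s. is_glb Q A s)"

definition qsup :: "'a qt \<Rightarrow> 'a \<Rightarrow> 'a \<Rightarrow> 'a" where
  "qsup Q a b = qSup Q {a, b}"

definition qinf :: "'a qt \<Rightarrow> 'a \<Rightarrow> 'a \<Rightarrow> 'a" where
  "qinf Q a b = qInf Q {a, b}"

definition qtop :: "'a qt \<Rightarrow> 'a" where
  "qtop Q = qSup Q (qcar Q)"

definition qbot :: "'a qt \<Rightarrow> 'a" where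
  "qbot Q = qSup Q {}"

definition complete_lattice_on :: "'a qt \<Rightarrow> bool" where
  "complete_lattice_on Q \<longleftrightarrow>
     (\<forall>a\<in>qcar Q. qle Q a a) \<and>
     (\<forall>a\<in>qcar Q. \<forall>b\<in>qcar Q. qle Q a b \<and> qle Q b a \<longrightarrow> a = b) \<and>
     (\<forall>a\<in>qcar Q. \<forall>b\<in>qcar Q. \<forall>c\<in>qcar Q. qle Q a b \<and> qle Q b c \<longrightarrow> qle Q a c) \<and>
     (\<forall>A. A \<subseteq> qcar Q \<longrightarrow> (\<exists>s. is_lub Q A s))"

definition quantale :: "'a qt \<Rightarrow> bool" where
  "quantale Q \<longleftrightarrow> complete_lattice_on Q \<and>
     (\<forall>a\<in>qcar Q. \<forall>b\<in>qcar Q. qmul Q a b \<in> qcar Q) \<and>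
     (\<forall>a\<in>qcar Q. \<forall>b\<in>qcar Q. \<forall>c\<in>qcar Q. qmul Q (qmul Q a b) c = qmul Q a (qmul Q b c)) \<and>
     (\<forall>a\<in>qcar Q. \<forall>A. A \<subseteq> qcar Q \<longrightarrow>
        qmul Q a (qSup Q A) = qSup Q ((\<lambda>b. qmul Q a b) ` A) \<and>
        qmul Q (qSup Q A) a = qSup Q ((\<lambda>b. qmul Q b a) ` A))"

definition involutive_quantale :: "'a qt \<Rightarrow> bool" where
  "involutive_quantale Q \<longleftrightarrow> quantale Q \<and>
     (\<forall>a\<in>qcar Q. qinv Q a \<in> qcar Q) \<and>
     (\<forall>a\<in>qcar Q. qinv Q (qinv Q a) = a) \<and>
     (\<forall>a\<in>qcar Q. \<forall>b\<in>qcar Q. qinv Q (qmul Q a b) = qmul Q (qinv Q b) (qinv Q a)) \<and>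
     (\<forall>A. A \<subseteq> qcar Q \<longrightarrow> qinv Q (qSup Q A) = qSup Q (qinv Q ` A))"

definition unital :: "'a qt \<Rightarrow> bool" where
  "unital Q \<longleftrightarrow> qone Q \<in> qcar Q \<and>
     (\<forall>a\<in>qcar Q. qmul Q (qone Q) a = a \<and> qmul Q a (qone Q) = a)"

definition strong :: "'a qt \<Rightarrow> bool" where
  "strong Q \<longleftrightarrow> qmul Q (qtop Q) (qtop Q) = qtop Q"

text \<open>The two categories of the statement.  In the strong category the
field qone is ignored.\<close>

datatype qcat = UnitalInv | StrongInv

definition qobj :: "qcat \<Rightarrow> 'a qt \<Rightarrow> bool" where
  "qobj K Q \<longleftrightarrow> involutive_quantale Q \<and>
     (case K of UnitalInv \<Rightarrow> unital Q | StrongInv \<Rightarrow> strong Q)"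

definition qhom :: "qcat \<Rightarrow> 'a qt \<Rightarrow> 'b qt \<Rightarrow> ('a \<Rightarrow> 'b) \<Rightarrow> bool" where
  "qhom K Q R h \<longleftrightarrow>
     (\<forall>a\<in>qcar Q. h a \<in> qcar R) \<and>
     (\<forall>A. A \<subseteq> qcar Q \<longrightarrow> h (qSup Q A) = qSup R (h ` A)) \<and>
     (\<forall>a\<in>qcar Q. \<forall>b\<in>qcar Q. h (qmul Q a b) = qmul R (h a) (h b)) \<and>
     (\<forall>a\<in>qcar Q. h (qinv Q a) = qinv R (h a)) \<and>
     (case K of UnitalInv \<Rightarrow> h (qone Q) = qone R | StrongInv \<Rightarrow> h (qtop Q) = qtop R)"

definition is_locale :: "qcat \<Rightarrow> 'a qt \<Rightarrow> bool" where
  "is_locale K L \<longleftrightarrow> complete_lattice_on L \<and>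
     (\<forall>a\<in>qcar L. \<forall>A. A \<subseteq> qcar L \<longrightarrow>
        qinf L a (qSup L A) = qSup L ((\<lambda>b. qinf L a b) ` A)) \<and>
     (\<forall>a\<in>qcar L. \<forall>b\<in>qcar L. qmul L a b = qinf L a b) \<and>
     (\<forall>a\<in>qcar L. qinv L a = a) \<and>
     (K = UnitalInv \<longrightarrow> qone L = qtop L)"

definition well_below :: "'a qt \<Rightarrow> 'a \<Rightarrow> 'a \<Rightarrow> bool" where
  "well_below L a' a \<longleftrightarrow>
     (\<exists>b\<in>qcar L. qinf L a' b = qbot L \<and> qsup L a b = qtop L)"

definition regular :: "'a qt \<Rightarrow> bool" where
  "regular L \<longleftrightarrow> (\<forall>a\<in>qcar L. a = qSup L {a'\<in>qcar L. well_below L a' a})"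

text \<open>(C, iota) is a coproduct in the category K of the family L indexed by I,
where the universal property is required against all test objects whose
carrier lies in the type 't (HOL cannot quantify over all types in a
formula).  Uniqueness of the mediating map is uniqueness on the carrier.\<close>

definition is_coproduct_wrt ::
  "qcat \<Rightarrow> 'i set \<Rightarrow> ('i \<Rightarrow> 'a qt) \<Rightarrow> 'c qt \<Rightarrow> ('i \<Rightarrow> 'a \<Rightarrow> 'c) \<Rightarrow> 't itself \<Rightarrow> bool" where
  "is_coproduct_wrt K I L C iota (_::'t itself) \<longleftrightarrow>
     qobj K C \<and> (\<forall>i\<in>I. qhom K (L i) C (iota i)) \<and>
     (\<forall>(Q::'t qt) (f::'i \<Rightarrow> 'a \<Rightarrow> 't). qobj K Q \<and> (\<forall>i\<in>I. qhom K (L i) Q (f i)) \<longrightarrow>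
        (\<exists>h. qhom K C Q h \<and> (\<forall>i\<in>I. \<forall>x\<in>qcar (L i). h (iota i x) = f i x) \<and>
           (\<forall>h'. qhom K C Q h' \<and> (\<forall>i\<in>I. \<forall>x\<in>qcar (L i). h' (iota i x) = f i x) \<longrightarrow>
              (\<forall>y\<in>qcar C. h' y = h y))))"

end

theory Submission
  imports Defs
begin


lemma cl_refl: "complete_lattice_on Q \<Longrightarrow> a \<in> qcar Q \<Longrightarrow> qle Q a a"
  unfolding complete_lattice_on_def by blast
lemma cl_antisym: "complete_lattice_on Q \<Longrightarrow> a \<in> qcar Q \<Longrightarrow> b \<in> qcar Q \<Longrightarrow> qle Q a b \<Longrightarrow> qle Q b a \<Longrightarrow> a = b"
  unfolding complete_lattice_on_def by blast
lemma cl_trans: "complete_lattice_on Q \<Longrightarrow> a \<in> qcar Q \<Longrightarrow> b \<in> qcar Q \<Longrightarrow> c \<in> qcar Q \<Longrightarrow> qle Q a b \<Longrightarrow> qle Q b c \<Longrightarrow> qle Q a c"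
  unfolding complete_lattice_on_def by blast

lemma lub_eq: assumes "complete_lattice_on Q" "is_lub Q A s" shows "qSup Q A = s"
  unfolding qSup_def
proof (rule the_equality)
  show "is_lub Q A s" by fact
  fix s' assume "is_lub Q A s'"
  then show "s' = s" using assms cl_antisym[OF assms(1)] unfolding is_lub_def by meson
qed

lemma glb_eq: assumes "complete_lattice_on Q" "is_glb Q A s" shows "qInf Q A = s"
  unfolding qInf_def
proof (rule the_equality)
  show "is_glb Q A s" by fact
  fix s' assume "is_glb Q A s'"
  then show "s' = s" using assms cl_antisym[OF assms(1)] unfolding is_glb_def by meson
qed

lemma cl_lub: assumes "complete_lattice_on Q" "A \<subseteq> qcar Q" shows "is_lub Q A (qSup Q A)"
proof -
  obtain s where "is_lub Q A s" using assms unfolding complete_lattice_on_def by blast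
  then show ?thesis using lub_eq[OF assms(1)] by simp
qed

lemma Sup_in: "complete_lattice_on Q \<Longrightarrow> A \<subseteq> qcar Q \<Longrightarrow> qSup Q A \<in> qcar Q"
  using cl_lub unfolding is_lub_def by blast
lemma Sup_upper: "complete_lattice_on Q \<Longrightarrow> A \<subseteq> qcar Q \<Longrightarrow> a \<in> A \<Longrightarrow> qle Q a (qSup Q A)"
  using cl_lub unfolding is_lub_def by blast
lemma Sup_least: "complete_lattice_on Q \<Longrightarrow> A \<subseteq> qcar Q \<Longrightarrow> u \<in> qcar Q \<Longrightarrow> (\<And>a. a \<in> A \<Longrightarrow> qle Q a u) \<Longrightarrow> qle Q (qSup Q A) u"
  using cl_lub unfolding is_lub_def by blast

lemma Sup_subset_mono: "complete_lattice_on Q \<Longrightarrow> A \<subseteq> B \<Longrightarrow> B \<subseteq> qcar Q \<Longrightarrow> qle Q (qSup Q A) (qSup Q B)"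
  by (rule Sup_least) (auto intro: Sup_upper Sup_in)

lemma Sup2_le: "complete_lattice_on Q \<Longrightarrow> a \<in> qcar Q \<Longrightarrow> b \<in> qcar Q \<Longrightarrow> c \<in> qcar Q \<Longrightarrow> qle Q a c \<Longrightarrow> qle Q b c \<Longrightarrow> qle Q (qSup Q {a,b}) c"
  by (rule Sup_least) auto

lemma bot_le: "complete_lattice_on Q \<Longrightarrow> x \<in> qcar Q \<Longrightarrow> qle Q (qSup Q {}) x"
  by (rule Sup_least) auto

lemma bot_in: "complete_lattice_on Q \<Longrightarrow> qSup Q {} \<in> qcar Q"
  by (rule Sup_in) auto

lemma top_in: "complete_lattice_on Q \<Longrightarrow> qtop Q \<in> qcar Q"
  unfolding qtop_def by (rule Sup_in) auto

lemma le_top: "complete_lattice_on Q \<Longrightarrow> x \<in> qcar Q \<Longrightarrow> qle Q x (qtop Q)"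
  unfolding qtop_def by (rule Sup_upper) auto

lemma Sup2_eq: assumes "complete_lattice_on Q" "a \<in> qcar Q" "b \<in> qcar Q" "qle Q a b"
  shows "qSup Q {a,b} = b"
  apply (rule lub_eq[OF assms(1)])
  using assms cl_refl[OF assms(1)] unfolding is_lub_def by auto

lemma inf_eq: assumes "complete_lattice_on Q" "a \<in> qcar Q" "b \<in> qcar Q" "qle Q a b"
  shows "qinf Q a b = a" "qinf Q b a = a"
  unfolding qinf_def 
  using assms cl_refl[OF assms(1)] by (auto intro!: glb_eq simp: is_glb_def insert_commute)

lemma cl_glb: assumes cl: "complete_lattice_on Q" and A: "A \<subseteq> qcar Q" shows "is_glb Q A (qInf Q A)"
proof -
  define s where "s = qSup Q {u \<in> qcar Q. \<forall>a\<in>A. qle Q u a}"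
  have "is_glb Q A s" unfolding is_glb_def s_def
    using A by (auto intro!: Sup_in[OF cl] Sup_least[OF cl] Sup_upper[OF cl])
  then show ?thesis using glb_eq[OF cl] by simp
qed

lemma inf_in: "complete_lattice_on Q \<Longrightarrow> a \<in> qcar Q \<Longrightarrow> b \<in> qcar Q \<Longrightarrow> qinf Q a b \<in> qcar Q"
  unfolding qinf_def using cl_glb[of Q "{a,b}"] unfolding is_glb_def by auto

lemma qinf_comm: "qinf Q a b = qinf Q b a"
  unfolding qinf_def by (simp add: insert_commute)

lemma quantale_cl: "quantale Q \<Longrightarrow> complete_lattice_on Q"
  unfolding quantale_def by blast
lemma mul_in: "quantale Q \<Longrightarrow> a \<in> qcar Q \<Longrightarrow> b \<in> qcar Q \<Longrightarrow> qmul Q a b \<in> qcar Q"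
  unfolding quantale_def by blast
lemma mul_assoc: "quantale Q \<Longrightarrow> a \<in> qcar Q \<Longrightarrow> b \<in> qcar Q \<Longrightarrow> c \<in> qcar Q \<Longrightarrow> qmul Q (qmul Q a b) c = qmul Q a (qmul Q b c)"
  unfolding quantale_def by blast
lemma mul_SupR: "quantale Q \<Longrightarrow> a \<in> qcar Q \<Longrightarrow> A \<subseteq> qcar Q \<Longrightarrow> qmul Q a (qSup Q A) = qSup Q ((\<lambda>b. qmul Q a b) ` A)"
  unfolding quantale_def by blast
lemma mul_SupL: "quantale Q \<Longrightarrow> a \<in> qcar Q \<Longrightarrow> A \<subseteq> qcar Q \<Longrightarrow> qmul Q (qSup Q A) a = qSup Q ((\<lambda>b. qmul Q b a) ` A)"
  unfolding quantale_def by blast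

lemma mul_monoL: assumes "quantale Q" "a \<in> qcar Q" "a' \<in> qcar Q" "b \<in> qcar Q" "qle Q a a'"
  shows "qle Q (qmul Q a b) (qmul Q a' b)"
proof -
  have cl: "complete_lattice_on Q" using assms quantale_cl by blast
  have "qmul Q a' b = qmul Q (qSup Q {a,a'}) b" using Sup2_eq[OF cl] assms by simp
  also have "\<dots> = qSup Q {qmul Q a b, qmul Q a' b}" using mul_SupL[OF assms(1), of b "{a,a'}"] assms by simp
  finally show ?thesis using Sup_upper[OF cl, of "{qmul Q a b, qmul Q a' b}"] mul_in[OF assms(1)] assms by simp
qed

lemma mul_monoR: assumes "quantale Q" "a \<in> qcar Q" "b' \<in> qcar Q" "b \<in> qcar Q" "qle Q b b'"
  shows "qle Q (qmul Q a b) (qmul Q a b')"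
proof -
  have cl: "complete_lattice_on Q" using assms quantale_cl by blast
  have "qmul Q a b' = qmul Q a (qSup Q {b,b'})" using Sup2_eq[OF cl] assms by simp
  also have "\<dots> = qSup Q {qmul Q a b, qmul Q a b'}" using mul_SupR[OF assms(1), of a "{b,b'}"] assms by simp
  finally show ?thesis using Sup_upper[OF cl, of "{qmul Q a b, qmul Q a b'}"] mul_in[OF assms(1)] assms by simp
qed

lemma mul_mono: assumes "quantale Q" "a \<in> qcar Q" "a' \<in> qcar Q" "b \<in> qcar Q" "b' \<in> qcar Q" "qle Q a a'" "qle Q b b'"
  shows "qle Q (qmul Q a b) (qmul Q a' b')"
  using cl_trans[OF quantale_cl[OF assms(1)]] mul_monoL[OF assms(1)] mul_monoR[OF assms(1)] mul_in[OF assms(1)] assms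
  by meson

lemma mul_botR: "quantale Q \<Longrightarrow> a \<in> qcar Q \<Longrightarrow> qmul Q a (qSup Q {}) = qSup Q {}"
  using mul_SupR[of Q a "{}"] by simp
lemma mul_botL: "quantale Q \<Longrightarrow> a \<in> qcar Q \<Longrightarrow> qmul Q (qSup Q {}) a = qSup Q {}"
  using mul_SupL[of Q a "{}"] by simp

lemma hom_mono: assumes "complete_lattice_on Q" "complete_lattice_on R" "qhom K Q R h"
  "a \<in> qcar Q" "b \<in> qcar Q" "qle Q a b" shows "qle R (h a) (h b)"
proof -
  have ha: "h a \<in> qcar R" "h b \<in> qcar R" using assms unfolding qhom_def by auto
  have "h b = h (qSup Q {a,b})" using Sup2_eq[OF assms(1)] assms by simp
  also have "\<dots> = qSup R {h a, h b}" using assms(3,4,5) unfolding qhom_def by auto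
  finally show ?thesis using Sup_upper[OF assms(2), of "{h a, h b}"] ha by simp
qed



lemma mul_swap4: assumes "quantale Q" "a \<in> qcar Q" "b \<in> qcar Q" "c \<in> qcar Q" "d \<in> qcar Q"
  "qmul Q b c = qmul Q c b"
  shows "qmul Q (qmul Q a b) (qmul Q c d) = qmul Q (qmul Q a c) (qmul Q b d)"
proof -
  note m = mul_in[OF assms(1)] and as = mul_assoc[OF assms(1)]
  have "qmul Q (qmul Q a b) (qmul Q c d) = qmul Q a (qmul Q b (qmul Q c d))"
    using assms(1-5) m as by simp
  also have "qmul Q b (qmul Q c d) = qmul Q (qmul Q b c) d" using assms(1-5) m as by simp
  also have "\<dots> = qmul Q (qmul Q c b) d" by (simp only: assms(6))
  also have "\<dots> = qmul Q c (qmul Q b d)" using assms(1-5) m as by simp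
  also have "qmul Q a (qmul Q c (qmul Q b d)) = qmul Q (qmul Q a c) (qmul Q b d)" using assms(1-5) m as by simp
  finally show ?thesis .
qed

lemma comm_step:
  assumes qQ: "quantale Q" and T: "T \<in> qcar Q" and z: "z \<in> qcar Q" "qle Q z T" "qmul Q z T = z" "qmul Q T z = z"
    and u: "u' \<in> qcar Q" "u \<in> qcar Q" "v \<in> qcar Q" "qle Q u' T"
    and uv: "qSup Q {u,v} = T" "qmul Q u' v = qSup Q {}" "qmul Q v u' = qSup Q {}"
    and vT: "qmul Q v T = v" "qmul Q T v = v"
  shows "qle Q (qmul Q u' z) (qmul Q z u)" "qle Q (qmul Q z u') (qmul Q u z)"
proof -
  have cl: "complete_lattice_on Q" using qQ quantale_cl by blast
  note m = mul_in[OF qQ] and as = mul_assoc[OF qQ]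
  have b: "qSup Q {} \<in> qcar Q" using bot_in[OF cl] .
  have "qmul Q u' z = qmul Q u' (qmul Q z (qSup Q {u,v}))" using z uv by simp
  also have "\<dots> = qSup Q {qmul Q u' (qmul Q z u), qmul Q u' (qmul Q z v)}"
    using mul_SupR[OF qQ, of z "{u,v}"] mul_SupR[OF qQ, of u' "{qmul Q z u, qmul Q z v}"] u z m by simp
  also have "qle Q \<dots> (qmul Q z u)"
  proof (rule Sup2_le[OF cl])
    have "qmul Q T (qmul Q z u) = qmul Q (qmul Q T z) u" using as[of T z u] T z u by simp
    then show "qle Q (qmul Q u' (qmul Q z u)) (qmul Q z u)"
      using mul_monoL[OF qQ, of u' T "qmul Q z u"] u z T m as cl_refl[OF cl] by simp
    have "qle Q (qmul Q u' (qmul Q z v)) (qmul Q u' (qmul Q T v))"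
      using mul_monoR[OF qQ, of u' "qmul Q T v" "qmul Q z v"] mul_monoL[OF qQ, of z T v] u z T m by simp
    then have "qle Q (qmul Q u' (qmul Q z v)) (qSup Q {})" using vT uv by simp
    then show "qle Q (qmul Q u' (qmul Q z v)) (qmul Q z u)"
      using cl_trans[OF cl] bot_le[OF cl] b m u z by meson
  qed (use u z m in auto)
  finally show "qle Q (qmul Q u' z) (qmul Q z u)" .
  have "qmul Q z u' = qmul Q (qmul Q (qSup Q {u,v}) z) u'" using z uv by simp
  also have "\<dots> = qSup Q {qmul Q (qmul Q u z) u', qmul Q (qmul Q v z) u'}"
    using mul_SupL[OF qQ, of z "{u,v}"] mul_SupL[OF qQ, of u' "{qmul Q u z, qmul Q v z}"] u z m by simp
  also have "qle Q \<dots> (qmul Q u z)"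
  proof (rule Sup2_le[OF cl])
    have "qmul Q (qmul Q u z) T = qmul Q u (qmul Q z T)" using as[of u z T] T z u by simp
    then show "qle Q (qmul Q (qmul Q u z) u') (qmul Q u z)"
      using mul_monoR[OF qQ, of "qmul Q u z" T u'] u z T m as cl_refl[OF cl] by simp
    have "qle Q (qmul Q (qmul Q v z) u') (qmul Q (qmul Q v T) u')"
      using mul_monoL[OF qQ, of "qmul Q v z" "qmul Q v T" u'] mul_monoR[OF qQ, of v T z] u z T m by simp
    then have "qle Q (qmul Q (qmul Q v z) u') (qSup Q {})" using vT uv by simp
    then show "qle Q (qmul Q (qmul Q v z) u') (qmul Q u z)"
      using cl_trans[OF cl] bot_le[OF cl] b m u z by meson
  qed (use u z m in auto)
  finally show "qle Q (qmul Q z u') (qmul Q u z)" .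
qed



theorem lemma4p3:
  fixes K :: qcat
    and I :: "'i set"
    and L :: "'i \<Rightarrow> 'a qt"
    and C :: "'c qt"
    and iota :: "'i \<Rightarrow> 'a \<Rightarrow> 'c"
  assumes locales: "\<forall>i\<in>I. is_locale K (L i)"
    and almost_all_regular: "\<exists>j. \<forall>i\<in>I. i \<noteq> j \<longrightarrow> regular (L i)"
    and coprod_self: "is_coproduct_wrt K I L C iota TYPE('c)"
    and coprod_big: "is_coproduct_wrt K I L C iota TYPE(('i \<times> 'a \<times> bool) list set)"
  shows "is_locale K C"
proof -
  have objC: "qobj K C" and homs: "\<And>i. i \<in> I \<Longrightarrow> qhom K (L i) C (iota i)"
    using coprod_self unfolding is_coproduct_wrt_def by auto
  have iqC: "involutive_quantale C" using objC unfolding qobj_def by blast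
  then have qQ: "quantale C" unfolding involutive_quantale_def by blast
  then have cl: "complete_lattice_on C" by (rule quantale_cl)
  have inv_in: "\<And>a. a \<in> qcar C \<Longrightarrow> qinv C a \<in> qcar C"
    and inv_inv: "\<And>a. a \<in> qcar C \<Longrightarrow> qinv C (qinv C a) = a"
    and inv_mul: "\<And>a b. a \<in> qcar C \<Longrightarrow> b \<in> qcar C \<Longrightarrow> qinv C (qmul C a b) = qmul C (qinv C b) (qinv C a)"
    and inv_Sup: "\<And>A. A \<subseteq> qcar C \<Longrightarrow> qinv C (qSup C A) = qSup C (qinv C ` A)"
    using iqC unfolding involutive_quantale_def by auto
  note m = mul_in[OF qQ] and as = mul_assoc[OF qQ]
  have lcL: "\<And>i. i \<in> I \<Longrightarrow> complete_lattice_on (L i)"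
    using locales unfolding is_locale_def by blast
  have Lmul: "\<And>i a b. i \<in> I \<Longrightarrow> a \<in> qcar (L i) \<Longrightarrow> b \<in> qcar (L i) \<Longrightarrow> qmul (L i) a b = qinf (L i) a b"
    using locales unfolding is_locale_def by blast
  have Linv: "\<And>i a. i \<in> I \<Longrightarrow> a \<in> qcar (L i) \<Longrightarrow> qinv (L i) a = a"
    using locales unfolding is_locale_def by blast
  have hin: "\<And>i a. i \<in> I \<Longrightarrow> a \<in> qcar (L i) \<Longrightarrow> iota i a \<in> qcar C"
    using homs unfolding qhom_def by blast
  have hSup: "\<And>i A. i \<in> I \<Longrightarrow> A \<subseteq> qcar (L i) \<Longrightarrow> iota i (qSup (L i) A) = qSup C (iota i ` A)"
    using homs unfolding qhom_def by blast
  have hmul: "\<And>i a b. i \<in> I \<Longrightarrow> a \<in> qcar (L i) \<Longrightarrow> b \<in> qcar (L i) \<Longrightarrow> iota i (qmul (L i) a b) = qmul C (iota i a) (iota i b)"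
    using homs unfolding qhom_def by blast
  have hinv: "\<And>i a. i \<in> I \<Longrightarrow> a \<in> qcar (L i) \<Longrightarrow> iota i (qinv (L i) a) = qinv C (iota i a)"
    using homs unfolding qhom_def by blast
  define T where "T = (case K of UnitalInv \<Rightarrow> qone C | StrongInv \<Rightarrow> qtop C)"
  have T_in: "T \<in> qcar C"
    using objC top_in[OF cl] unfolding T_def qobj_def unital_def by (cases K) auto
  have TT: "qmul C T T = T"
    using objC T_in unfolding T_def qobj_def unital_def strong_def by (cases K) auto
  have T_inv: "qinv C T = T"
  proof (cases K)
    case UnitalInv
    then have un: "unital C" using objC unfolding qobj_def by auto
    have Tq: "T = qone C" using UnitalInv unfolding T_def by simp
    have iT: "qinv C T \<in> qcar C" using inv_in T_in by blast
    have "qmul C (qinv C T) T = qinv C T" using un iT Tq unfolding unital_def by auto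
    then have "qinv C (qmul C (qinv C T) T) = qinv C (qinv C T)" by simp
    then have "qmul C (qinv C T) T = T" using inv_mul[OF iT T_in] inv_inv T_in by simp
    then show ?thesis using un iT Tq unfolding unital_def by auto
  next
    case StrongInv
    then have Tq: "T = qSup C (qcar C)" unfolding T_def qtop_def by simp
    have "qinv C ` qcar C = qcar C"
    proof
      show "qinv C ` qcar C \<subseteq> qcar C" using inv_in by blast
      show "qcar C \<subseteq> qinv C ` qcar C"
      proof
        fix x assume "x \<in> qcar C"
        then show "x \<in> qinv C ` qcar C" using inv_inv[of x] inv_in[of x] by (metis image_eqI)
      qed
    qed
    then show ?thesis using Tq inv_Sup[of "qcar C"] by simp
  qed
  have iota_top: "\<And>i. i \<in> I \<Longrightarrow> iota i (qtop (L i)) = T"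
  proof -
    fix i assume i: "i \<in> I"
    show "iota i (qtop (L i)) = T"
    proof (cases K)
      case UnitalInv
      then show ?thesis using homs[OF i] locales i unfolding T_def qhom_def is_locale_def by auto
    next
      case StrongInv
      then show ?thesis using homs[OF i] unfolding T_def qhom_def by auto
    qed
  qed
  define Z where "Z = {z \<in> qcar C. qle C z T \<and> qmul C z T = z \<and> qmul C T z = z}"
  have gZ: "\<And>i a. i \<in> I \<Longrightarrow> a \<in> qcar (L i) \<Longrightarrow> iota i a \<in> Z"
  proof -
    fix i a assume i: "i \<in> I" and a: "a \<in> qcar (L i)"
    have tL: "qtop (L i) \<in> qcar (L i)" using top_in[OF lcL[OF i]] .
    have aT: "qle (L i) a (qtop (L i))" using le_top[OF lcL[OF i] a] .
    have "qle C (iota i a) (iota i (qtop (L i)))"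
      using hom_mono[OF lcL[OF i] cl homs[OF i] a tL aT] .
    then have 1: "qle C (iota i a) T" using iota_top[OF i] by simp
    have "qmul C (iota i a) T = iota i (qmul (L i) a (qtop (L i)))" using hmul[OF i a tL] iota_top[OF i] by simp
    also have "\<dots> = iota i a" using Lmul[OF i a tL] inf_eq[OF lcL[OF i] a tL aT] by simp
    finally have 2: "qmul C (iota i a) T = iota i a" .
    have "qmul C T (iota i a) = iota i (qmul (L i) (qtop (L i)) a)" using hmul[OF i tL a] iota_top[OF i] by simp
    also have "\<dots> = iota i a" using Lmul[OF i tL a] inf_eq[OF lcL[OF i] a tL aT] by simp
    finally have 3: "qmul C T (iota i a) = iota i a" .
    show "iota i a \<in> Z" unfolding Z_def using 1 2 3 hin[OF i a] by simp
  qed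
  have TZ: "T \<in> Z" unfolding Z_def using T_in TT cl_refl[OF cl] by auto
  have Zmul: "\<And>z w. z \<in> Z \<Longrightarrow> w \<in> Z \<Longrightarrow> qmul C z w \<in> Z"
  proof -
    fix z w assume z: "z \<in> Z" and w: "w \<in> Z"
    have zc: "z \<in> qcar C" "qle C z T" "qmul C z T = z" "qmul C T z = z" using z unfolding Z_def by auto
    have wc: "w \<in> qcar C" "qle C w T" "qmul C w T = w" "qmul C T w = w" using w unfolding Z_def by auto
    have "qle C (qmul C z w) (qmul C z T)" using mul_monoR[OF qQ zc(1) T_in wc(1) wc(2)] .
    then have 1: "qle C (qmul C z w) T" using zc cl_trans[OF cl] m T_in wc by metis
    have 2: "qmul C (qmul C z w) T = qmul C z w" using as[OF zc(1) wc(1) T_in] wc by simp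
    have 3: "qmul C T (qmul C z w) = qmul C z w" using as[OF T_in zc(1) wc(1)] zc by simp
    show "qmul C z w \<in> Z" unfolding Z_def using 1 2 3 m zc wc by simp
  qed
  have Zcar: "Z \<subseteq> qcar C" unfolding Z_def by auto
  define E where "E = {e \<in> Z. qmul C e e = e \<and> qinv C e = e \<and> (\<forall>z\<in>Z. qmul C e z = qmul C z e)}"
  have TE: "T \<in> E" unfolding E_def using TZ TT T_inv by (auto simp: Z_def)
  have Emul: "\<And>e e'. e \<in> E \<Longrightarrow> e' \<in> E \<Longrightarrow> qmul C e e' \<in> E"
  proof -
    fix e e' assume e: "e \<in> E" and e': "e' \<in> E"
    have eZ: "e \<in> Z" "e' \<in> Z" using e e' unfolding E_def by auto
    have ec: "e \<in> qcar C" "e' \<in> qcar C" using eZ Zcar by auto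
    have ee: "qmul C e e = e" "qinv C e = e" "\<And>z. z \<in> Z \<Longrightarrow> qmul C e z = qmul C z e"
      using e unfolding E_def by auto
    have ee': "qmul C e' e' = e'" "qinv C e' = e'" "\<And>z. z \<in> Z \<Longrightarrow> qmul C e' z = qmul C z e'"
      using e' unfolding E_def by auto
    have c: "qmul C e' e = qmul C e e'" using ee'(3)[OF eZ(1)] .
    have 1: "qmul C (qmul C e e') (qmul C e e') = qmul C e e'"
      using mul_swap4[OF qQ ec(1) ec(2) ec(1) ec(2) c] ee ee' by simp
    have 2: "qinv C (qmul C e e') = qmul C e e'" using inv_mul[OF ec] ee ee' c by simp
    have 3: "qmul C (qmul C e e') z = qmul C z (qmul C e e')" if z: "z \<in> Z" for z
    proof -
      have zc: "z \<in> qcar C" using z Zcar by auto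
      have "qmul C (qmul C e e') z = qmul C e (qmul C e' z)" using as ec zc by simp
      also have "\<dots> = qmul C e (qmul C z e')" using ee'(3)[OF z] by simp
      also have "\<dots> = qmul C (qmul C e z) e'" using as ec zc by simp
      also have "\<dots> = qmul C (qmul C z e) e'" using ee(3)[OF z] by simp
      also have "\<dots> = qmul C z (qmul C e e')" using as ec zc by simp
      finally show ?thesis .
    qed
    show "qmul C e e' \<in> E" unfolding E_def using Zmul[OF eZ] 1 2 3 by blast
  qed
  have regE: "\<And>i a. i \<in> I \<Longrightarrow> regular (L i) \<Longrightarrow> a \<in> qcar (L i) \<Longrightarrow> iota i a \<in> E"
  proof -
    fix i a assume i: "i \<in> I" and reg: "regular (L i)" and a: "a \<in> qcar (L i)"
    note lc = lcL[OF i]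
    define W where "W = {a' \<in> qcar (L i). well_below (L i) a' a}"
    have Wc: "W \<subseteq> qcar (L i)" unfolding W_def by auto
    have aW: "a = qSup (L i) W" using reg a unfolding regular_def W_def by blast
    have F: "iota i (qSup (L i) W) = qSup C (iota i ` W)" using hSup[OF i Wc] .
    have uS: "iota i a = qSup C (iota i ` W)" using F aW[symmetric] by simp
    have uZ: "iota i a \<in> Z" using gZ[OF i a] .
    have uc: "iota i a \<in> qcar C" using hin[OF i a] .
    have iWc: "iota i ` W \<subseteq> qcar C" using hin[OF i] Wc by blast
    have key: "qle C (qmul C (iota i a') z) (qmul C z (iota i a)) \<and> qle C (qmul C z (iota i a')) (qmul C (iota i a) z)"
      if a': "a' \<in> W" and z: "z \<in> Z" for a' z
    proof -
      have a'c: "a' \<in> qcar (L i)" using a' Wc by blast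
      obtain b where b: "b \<in> qcar (L i)" and b1: "qinf (L i) a' b = qbot (L i)" and b2: "qsup (L i) a b = qtop (L i)"
        using a' unfolding W_def well_below_def by blast
      have zc: "z \<in> qcar C" "qle C z T" "qmul C z T = z" "qmul C T z = z" using z unfolding Z_def by auto
      have u'Z: "iota i a' \<in> Z" using gZ[OF i a'c] .
      have vZ: "iota i b \<in> Z" using gZ[OF i b] .
      have u'c: "iota i a' \<in> qcar C" "qle C (iota i a') T" using u'Z unfolding Z_def by auto
      have vc: "iota i b \<in> qcar C" "qmul C (iota i b) T = iota i b" "qmul C T (iota i b) = iota i b"
        using vZ unfolding Z_def by auto
      have "iota i (qSup (L i) {a,b}) = qSup C (iota i ` {a,b})" using hSup[OF i, of "{a,b}"] a b by simp
      then have uv1: "qSup C {iota i a, iota i b} = T" using b2 iota_top[OF i] unfolding qsup_def by simp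
      have bot: "iota i (qbot (L i)) = qSup C {}" using hSup[OF i, of "{}"] unfolding qbot_def by simp
      have uv2: "qmul C (iota i a') (iota i b) = qSup C {}"
        using hmul[OF i a'c b] Lmul[OF i a'c b] b1 bot by simp
      have uv3: "qmul C (iota i b) (iota i a') = qSup C {}"
        using hmul[OF i b a'c] Lmul[OF i b a'c] b1 bot qinf_comm by metis
      show ?thesis using comm_step[OF qQ T_in zc u'c(1) uc vc(1) u'c(2) uv1 uv2 uv3 vc(2) vc(3)] by blast
    qed
    have comm: "qmul C (iota i a) z = qmul C z (iota i a)" if z: "z \<in> Z" for z
    proof -
      have zc: "z \<in> qcar C" using z Zcar by blast
      have zu: "qmul C z (iota i a) \<in> qcar C" "qmul C (iota i a) z \<in> qcar C" using m zc uc by auto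
      have 1: "qmul C (iota i a) z = qSup C ((\<lambda>b. qmul C b z) ` iota i ` W)"
        using mul_SupL[OF qQ zc iWc] uS by simp
      have 2: "qmul C z (iota i a) = qSup C ((\<lambda>b. qmul C z b) ` iota i ` W)"
        using mul_SupR[OF qQ zc iWc] uS by simp
      have "qle C (qmul C (iota i a) z) (qmul C z (iota i a))"
        unfolding 1 by (rule Sup_least[OF cl]) (use iWc m zc zu key z in auto)
      moreover have "qle C (qmul C z (iota i a)) (qmul C (iota i a) z)"
        unfolding 2 by (rule Sup_least[OF cl]) (use iWc m zc zu key z in auto)
      ultimately show ?thesis using cl_antisym[OF cl] zu by blast
    qed
    have "qinf (L i) a a = a" using inf_eq[OF lc a a cl_refl[OF lc a]] by simp
    then have idem: "qmul C (iota i a) (iota i a) = iota i a" using hmul[OF i a a] Lmul[OF i a a] by simp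
    have inv: "qinv C (iota i a) = iota i a" using hinv[OF i a] Linv[OF i a] by simp
    show "iota i a \<in> E" unfolding E_def using uZ idem inv comm by blast
  qed
  obtain j0 where j0: "\<forall>i\<in>I. i \<noteq> j0 \<longrightarrow> regular (L i)" using almost_all_regular by blast
  define H where "H = insert T {iota j0 a | a. j0 \<in> I \<and> a \<in> qcar (L j0)}"
  have HZ: "H \<subseteq> Z" unfolding H_def using TZ gZ by auto
  have Hmul: "\<And>h h'. h \<in> H \<Longrightarrow> h' \<in> H \<Longrightarrow> qmul C h h' \<in> H \<and> qmul C h h' = qmul C h' h"
  proof -
    fix h h' assume h: "h \<in> H" and h': "h' \<in> H"
    have hZ: "h \<in> Z" "h' \<in> Z" using h h' HZ by auto
    show "qmul C h h' \<in> H \<and> qmul C h h' = qmul C h' h"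
    proof (cases "h = T \<or> h' = T")
      case True
      then show ?thesis using hZ h h' unfolding Z_def by auto
    next
      case False
      then obtain a b where j: "j0 \<in> I" and a: "a \<in> qcar (L j0)" and b: "b \<in> qcar (L j0)"
        and ha: "h = iota j0 a" and hb: "h' = iota j0 b" using h h' unfolding H_def by auto
      have ab: "qmul C h h' = iota j0 (qinf (L j0) a b)" using hmul[OF j a b] Lmul[OF j a b] ha hb by simp
      have ba: "qmul C h' h = iota j0 (qinf (L j0) a b)" using hmul[OF j b a] Lmul[OF j b a] ha hb qinf_comm by metis
      have "qinf (L j0) a b = qmul (L j0) a b" using Lmul[OF j a b] by simp
      moreover have "qinf (L j0) a b \<in> qcar (L j0)" using inf_in[OF lcL[OF j] a b] .
      ultimately show ?thesis using ab ba j unfolding H_def by auto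
    qed
  qed
  have Hidem: "\<And>h. h \<in> H \<Longrightarrow> qmul C h h = h \<and> qinv C h = h"
  proof -
    fix h assume h: "h \<in> H"
    show "qmul C h h = h \<and> qinv C h = h"
    proof (cases "h = T")
      case True
      then show ?thesis using TT T_inv by simp
    next
      case False
      then obtain a where j: "j0 \<in> I" and a: "a \<in> qcar (L j0)" and ha: "h = iota j0 a"
        using h unfolding H_def by auto
      have "qinf (L j0) a a = a" using inf_eq[OF lcL[OF j] a a cl_refl[OF lcL[OF j] a]] by simp
      then show ?thesis using hmul[OF j a a] Lmul[OF j a a] hinv[OF j a] Linv[OF j a] ha by simp
    qed
  qed
  define M where "M = {qmul C e h | e h. e \<in> E \<and> h \<in> H}"
  have MZ: "M \<subseteq> Z" unfolding M_def E_def using HZ Zmul by blast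
  have Mcar: "M \<subseteq> qcar C" using MZ Zcar by blast
  have Ec: "\<And>e. e \<in> E \<Longrightarrow> e \<in> qcar C \<and> e \<in> Z \<and> qmul C e e = e \<and> qinv C e = e \<and> (\<forall>z\<in>Z. qmul C e z = qmul C z e)"
    unfolding E_def using Zcar by auto
  have Hc: "\<And>h. h \<in> H \<Longrightarrow> h \<in> qcar C \<and> h \<in> Z" using HZ Zcar by auto
  have Mmul: "\<And>x y. x \<in> M \<Longrightarrow> y \<in> M \<Longrightarrow> qmul C x y \<in> M"
  proof -
    fix x y assume "x \<in> M" "y \<in> M"
    then obtain e h e' h' where e: "e \<in> E" "h \<in> H" "e' \<in> E" "h' \<in> H" and x: "x = qmul C e h" and y: "y = qmul C e' h'"
      unfolding M_def by auto
    have c: "qmul C h e' = qmul C e' h" using Ec[OF e(3)] Hc[OF e(2)] by auto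
    have "qmul C x y = qmul C (qmul C e e') (qmul C h h')"
      using mul_swap4[OF qQ _ _ _ _ c, of e h'] x y Ec e Hc by auto
    then show "qmul C x y \<in> M" unfolding M_def using Emul e Hmul by blast
  qed
  have Midem: "\<And>x. x \<in> M \<Longrightarrow> qmul C x x = x \<and> qinv C x = x"
  proof -
    fix x assume "x \<in> M"
    then obtain e h where e: "e \<in> E" "h \<in> H" and x: "x = qmul C e h"
      unfolding M_def by auto
    have c: "qmul C h e = qmul C e h" using Ec[OF e(1)] Hc[OF e(2)] by auto
    have "qmul C x x = qmul C (qmul C e e) (qmul C h h)"
      using mul_swap4[OF qQ _ _ _ _ c, of e h] x Ec e Hc by auto
    then have 1: "qmul C x x = x" using x Ec[OF e(1)] Hidem[OF e(2)] by simp
    have "qinv C x = qmul C h e" using inv_mul x Ec[OF e(1)] Hidem[OF e(2)] Hc[OF e(2)] by simp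
    then show "qmul C x x = x \<and> qinv C x = x" using 1 c x by simp
  qed
  have gM: "\<And>i a. i \<in> I \<Longrightarrow> a \<in> qcar (L i) \<Longrightarrow> iota i a \<in> M"
  proof -
    fix i a assume i: "i \<in> I" and a: "a \<in> qcar (L i)"
    have gz: "iota i a \<in> Z" using gZ i a by blast
    show "iota i a \<in> M"
    proof (cases "i = j0")
      case True
      then have "iota i a \<in> H" unfolding H_def using i a by auto
      moreover have "qmul C T (iota i a) = iota i a" using gz unfolding Z_def by auto
      ultimately show ?thesis unfolding M_def using TE by force
    next
      case False
      then have "iota i a \<in> E" using regE j0 i a by blast
      moreover have "qmul C (iota i a) T = iota i a" using gz unfolding Z_def by auto
      moreover have "T \<in> H" unfolding H_def by simp
      ultimately show ?thesis unfolding M_def by force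
    qed
  qed
  have TM: "T \<in> M" unfolding M_def H_def using TE TT by force
  define S where "S = {x \<in> qcar C. x = qSup C {m \<in> M. qle C m x}}"
  have Scar: "S \<subseteq> qcar C" unfolding S_def by auto
  have S_char: "qSup C A \<in> S" if A: "A \<subseteq> M" for A
  proof -
    have Ac: "A \<subseteq> qcar C" using A Mcar by blast
    define x where "x = qSup C A"
    have xc: "x \<in> qcar C" unfolding x_def using Sup_in[OF cl Ac] .
    have Mxc: "{m \<in> M. qle C m x} \<subseteq> qcar C" using Mcar by blast
    have "A \<subseteq> {m \<in> M. qle C m x}"
    proof
      fix t assume "t \<in> A"
      then show "t \<in> {m \<in> M. qle C m x}" using A Sup_upper[OF cl Ac, of t] unfolding x_def by blast
    qed
    then have 1: "qle C x (qSup C {m \<in> M. qle C m x})"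
      using Sup_subset_mono[OF cl _ Mxc] x_def by simp
    have 2: "qle C (qSup C {m \<in> M. qle C m x}) x"
      by (rule Sup_least[OF cl Mxc xc]) auto
    have eq: "x = qSup C {m \<in> M. qle C m x}" using cl_antisym[OF cl xc Sup_in[OF cl Mxc] 1 2] .
    have "x \<in> S" unfolding S_def by (intro CollectI conjI xc eq)
    then show ?thesis unfolding x_def .
  qed
  have MS: "m \<in> S" if m: "m \<in> M" for m
  proof -
    have mc: "m \<in> qcar C" using m Mcar by blast
    have "qSup C {m} = m" using Sup2_eq[OF cl mc mc cl_refl[OF cl mc]] by simp
    then show ?thesis using S_char[of "{m}"] m by simp
  qed
  have S_eq: "\<exists>A. A \<subseteq> M \<and> qSup C A = x" if x: "x \<in> S" for x
    using x unfolding S_def by (intro exI[of _ "{m \<in> M. qle C m x}"]) auto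
  have S_Sup: "qSup C B \<in> S" if B: "B \<subseteq> S" for B
  proof -
    have Bc: "B \<subseteq> qcar C" using B Scar by blast
    define x where "x = qSup C B"
    have xc: "x \<in> qcar C" unfolding x_def using Sup_in[OF cl Bc] .
    have Mxc: "{m \<in> M. qle C m x} \<subseteq> qcar C" using Mcar by blast
    have s1: "qle C (qSup C B) (qSup C {m \<in> M. qle C m x})"
    proof (rule Sup_least[OF cl Bc Sup_in[OF cl Mxc]])
      fix b assume b: "b \<in> B"
      have bS: "b \<in> S" "b \<in> qcar C" using b B Bc by auto
      obtain Ab where Ab: "Ab \<subseteq> M" "qSup C Ab = b" using S_eq[OF bS(1)] by blast
      have Abc: "Ab \<subseteq> qcar C" using Ab Mcar by blast
      have bx: "qle C b x" unfolding x_def using Sup_upper[OF cl Bc b] .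
      have "Ab \<subseteq> {m \<in> M. qle C m x}"
      proof
        fix t assume t: "t \<in> Ab"
        have "qle C t b" using Sup_upper[OF cl Abc t] Ab(2) by simp
        then show "t \<in> {m \<in> M. qle C m x}" using cl_trans[OF cl _ bS(2) xc] bx Abc t Ab(1) by blast
      qed
      then have "qle C (qSup C Ab) (qSup C {m \<in> M. qle C m x})"
        using Sup_subset_mono[OF cl _ Mxc] by blast
      then show "qle C b (qSup C {m \<in> M. qle C m x})" using Ab(2) by simp
    qed
    then have 1: "qle C x (qSup C {m \<in> M. qle C m x})" by (simp only: x_def[symmetric])
    have 2: "qle C (qSup C {m \<in> M. qle C m x}) x"
      by (rule Sup_least[OF cl Mxc xc]) auto
    have eq: "x = qSup C {m \<in> M. qle C m x}" using cl_antisym[OF cl xc Sup_in[OF cl Mxc] 1 2] .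
    have "x \<in> S" unfolding S_def by (intro CollectI conjI xc eq)
    then show ?thesis unfolding x_def .
  qed
  have S_mul: "qmul C x y \<in> S" if x: "x \<in> S" and y: "y \<in> S" for x y
  proof -
    obtain A where A: "A \<subseteq> M" "qSup C A = x" using S_eq[OF x] by blast
    obtain B where B: "B \<subseteq> M" "qSup C B = y" using S_eq[OF y] by blast
    have Ac: "A \<subseteq> qcar C" and Bc: "B \<subseteq> qcar C" using A B Mcar by auto
    have xc: "x \<in> qcar C" using x Scar by blast
    have "qmul C x y = qSup C ((\<lambda>n. qmul C x n) ` B)" using mul_SupR[OF qQ xc Bc] B by simp
    moreover have "(\<lambda>n. qmul C x n) ` B \<subseteq> S"
    proof
      fix t assume "t \<in> (\<lambda>n. qmul C x n) ` B"
      then obtain n where n: "n \<in> B" and t: "t = qmul C x n" by blast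
      have nc: "n \<in> qcar C" using n Bc by blast
      have "t = qSup C ((\<lambda>k. qmul C k n) ` A)" using mul_SupL[OF qQ nc Ac] A t by simp
      moreover have "(\<lambda>k. qmul C k n) ` A \<subseteq> S" using Mmul A n B MS by blast
      ultimately show "t \<in> S" using S_Sup by simp
    qed
    ultimately show ?thesis using S_Sup by simp
  qed
  have S_inv: "qinv C x = x" if x: "x \<in> S" for x
  proof -
    obtain A where A: "A \<subseteq> M" "qSup C A = x" using S_eq[OF x] by blast
    have Ac: "A \<subseteq> qcar C" using A Mcar by auto
    have "qinv C ` A = A" using Midem A by (force simp: image_iff)
    then show ?thesis using inv_Sup[OF Ac] A by simp
  qed
  have TS: "T \<in> S" using MS TM .
  define Cs where "Cs = C\<lparr>qcar := S\<rparr>"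
  have Cs_simps[simp]: "qcar Cs = S" "qle Cs = qle C" "qmul Cs = qmul C" "qinv Cs = qinv C" "qone Cs = qone C"
    unfolding Cs_def by simp_all
  have lubCs: "is_lub Cs A (qSup C A)" if A: "A \<subseteq> S" for A
  proof -
    have Ac: "A \<subseteq> qcar C" using A Scar by blast
    show ?thesis unfolding is_lub_def Cs_simps
      using S_Sup[OF A] Sup_upper[OF cl Ac] Sup_least[OF cl Ac] Scar by blast
  qed
  have clCs: "complete_lattice_on Cs"
    unfolding complete_lattice_on_def Cs_simps
  proof (intro conjI ballI allI impI)
    show "\<exists>s. is_lub Cs A s" if "A \<subseteq> S" for A using lubCs[OF that] by blast
  qed (use Scar cl_refl[OF cl] cl_antisym[OF cl] cl_trans[OF cl] in blast)+
  have SupCs: "qSup Cs A = qSup C A" if A: "A \<subseteq> S" for A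
    using lub_eq[OF clCs lubCs[OF A]] .
  have qCs: "quantale Cs"
    unfolding quantale_def
  proof (intro conjI ballI allI impI)
    show "complete_lattice_on Cs" by (rule clCs)
    show "qmul Cs a b \<in> qcar Cs" if "a \<in> qcar Cs" "b \<in> qcar Cs" for a b using S_mul that by simp
    show "qmul Cs (qmul Cs a b) c = qmul Cs a (qmul Cs b c)" if "a \<in> qcar Cs" "b \<in> qcar Cs" "c \<in> qcar Cs" for a b c
      using as that Scar by auto
    fix a A assume a: "a \<in> qcar Cs" and A: "A \<subseteq> qcar Cs"
    have ac: "a \<in> qcar C" "a \<in> S" using a Scar by auto
    have AS: "A \<subseteq> S" and Ac: "A \<subseteq> qcar C" using A Scar by auto
    have i1: "(\<lambda>b. qmul C a b) ` A \<subseteq> S" "(\<lambda>b. qmul C b a) ` A \<subseteq> S" using S_mul ac AS by blast+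
    show "qmul Cs a (qSup Cs A) = qSup Cs ((\<lambda>b. qmul Cs a b) ` A)"
      using SupCs[OF AS] SupCs[OF i1(1)] mul_SupR[OF qQ ac(1) Ac] by simp
    show "qmul Cs (qSup Cs A) a = qSup Cs ((\<lambda>b. qmul Cs b a) ` A)"
      using SupCs[OF AS] SupCs[OF i1(2)] mul_SupL[OF qQ ac(1) Ac] by simp
  qed
  have iqCs: "involutive_quantale Cs"
    unfolding involutive_quantale_def
  proof (intro conjI ballI allI impI)
    show "quantale Cs" by (rule qCs)
    show "qinv Cs a \<in> qcar Cs" if "a \<in> qcar Cs" for a using S_inv that by simp
    show "qinv Cs (qinv Cs a) = a" if "a \<in> qcar Cs" for a using S_inv that by simp
    show "qinv Cs (qmul Cs a b) = qmul Cs (qinv Cs b) (qinv Cs a)" if "a \<in> qcar Cs" "b \<in> qcar Cs" for a b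
      using inv_mul that Scar by auto
    fix A assume A: "A \<subseteq> qcar Cs"
    then have AS: "A \<subseteq> S" by simp
    have "qinv C ` A = A" using S_inv AS by (force simp: image_iff)
    then show "qinv Cs (qSup Cs A) = qSup Cs (qinv Cs ` A)" using SupCs[OF AS] S_inv[OF S_Sup[OF AS]] by simp
  qed
  have topCs: "qtop Cs = qtop C" if "qtop C \<in> S"
  proof -
    have "qtop Cs = qSup C S" unfolding qtop_def using SupCs[of S] by simp
    moreover have "qle C (qSup C S) (qtop C)" unfolding qtop_def using Sup_subset_mono[OF cl Scar] by simp
    moreover have "qle C (qtop C) (qSup C S)" using Sup_upper[OF cl Scar that] .
    ultimately show ?thesis using cl_antisym[OF cl] Sup_in[OF cl Scar] top_in[OF cl] by simp
  qed
  have objCs: "qobj K Cs"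
  proof (cases K)
    case UnitalInv
    then have "unital C" using objC unfolding qobj_def by simp
    moreover have "qone C \<in> S" using TS UnitalInv unfolding T_def by simp
    ultimately have "unital Cs" unfolding unital_def using Scar by auto
    then show ?thesis unfolding qobj_def using iqCs UnitalInv by simp
  next
    case StrongInv
    then have "strong C" using objC unfolding qobj_def by simp
    moreover have "qtop C \<in> S" using TS StrongInv unfolding T_def by simp
    ultimately have "strong Cs" unfolding strong_def using topCs by simp
    then show ?thesis unfolding qobj_def using iqCs StrongInv by simp
  qed
  have homCs: "qhom K (L i) Cs (iota i)" if i: "i \<in> I" for i
    unfolding qhom_def
  proof (intro conjI ballI allI impI)
    show "iota i a \<in> qcar Cs" if "a \<in> qcar (L i)" for a using MS gM i that by simp
    show "iota i (qSup (L i) A) = qSup Cs (iota i ` A)" if A: "A \<subseteq> qcar (L i)" for A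
    proof -
      have "iota i ` A \<subseteq> S" using MS gM i A by blast
      then show ?thesis using SupCs hSup[OF i A] by simp
    qed
    show "iota i (qmul (L i) a b) = qmul Cs (iota i a) (iota i b)" if "a \<in> qcar (L i)" "b \<in> qcar (L i)" for a b
      using hmul i that by simp
    show "iota i (qinv (L i) a) = qinv Cs (iota i a)" if "a \<in> qcar (L i)" for a
      using hinv i that by simp
    show "case K of UnitalInv \<Rightarrow> iota i (qone (L i)) = qone Cs | StrongInv \<Rightarrow> iota i (qtop (L i)) = qtop Cs"
    proof (cases K)
      case UnitalInv then show ?thesis using homs[OF i] unfolding qhom_def by simp
    next
      case StrongInv
      then have "qtop C \<in> S" using TS unfolding T_def by simp
      then show ?thesis using homs[OF i] StrongInv topCs unfolding qhom_def by simp
    qed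
  qed
  have UP: "\<forall>(Q::'c qt) (f::'i \<Rightarrow> 'a \<Rightarrow> 'c). qobj K Q \<and> (\<forall>i\<in>I. qhom K (L i) Q (f i)) \<longrightarrow>
        (\<exists>h. qhom K C Q h \<and> (\<forall>i\<in>I. \<forall>x\<in>qcar (L i). h (iota i x) = f i x) \<and>
           (\<forall>h'. qhom K C Q h' \<and> (\<forall>i\<in>I. \<forall>x\<in>qcar (L i). h' (iota i x) = f i x) \<longrightarrow>
              (\<forall>y\<in>qcar C. h' y = h y)))"
    using coprod_self unfolding is_coproduct_wrt_def by blast
  obtain h where h: "qhom K C Cs h" and hext: "\<forall>i\<in>I. \<forall>x\<in>qcar (L i). h (iota i x) = iota i x"
    using UP[rule_format, of Cs iota] objCs homCs by blast
  have hC: "qhom K C C h"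
    unfolding qhom_def
  proof (intro conjI ballI allI impI)
    have hS: "\<And>a. a \<in> qcar C \<Longrightarrow> h a \<in> S" using h unfolding qhom_def by simp
    show "h a \<in> qcar C" if "a \<in> qcar C" for a using hS that Scar by blast
    show "h (qSup C A) = qSup C (h ` A)" if A: "A \<subseteq> qcar C" for A
    proof -
      have "h ` A \<subseteq> S" using hS A by blast
      then show ?thesis using h A SupCs unfolding qhom_def by simp
    qed
    show "h (qmul C a b) = qmul C (h a) (h b)" if "a \<in> qcar C" "b \<in> qcar C" for a b
      using h that unfolding qhom_def by simp
    show "h (qinv C a) = qinv C (h a)" if "a \<in> qcar C" for a
      using h that unfolding qhom_def by simp
    show "case K of UnitalInv \<Rightarrow> h (qone C) = qone C | StrongInv \<Rightarrow> h (qtop C) = qtop C"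
    proof (cases K)
      case UnitalInv then show ?thesis using h unfolding qhom_def by simp
    next
      case StrongInv
      then have "qtop C \<in> S" using TS unfolding T_def by simp
      then show ?thesis using h StrongInv topCs unfolding qhom_def by simp
    qed
  qed
  have idC: "qhom K C C (\<lambda>x. x)"
    unfolding qhom_def by (cases K) auto
  obtain h0 where h0: "\<forall>h'. qhom K C C h' \<and> (\<forall>i\<in>I. \<forall>x\<in>qcar (L i). h' (iota i x) = iota i x) \<longrightarrow>
              (\<forall>y\<in>qcar C. h' y = h0 y)"
    using UP[rule_format, of C iota] objC homs by blast
  have allS: "y \<in> S" if y: "y \<in> qcar C" for y
  proof -
    have "h y = h0 y" using h0 hC hext y by blast
    moreover have "y = h0 y" using h0[rule_format, of "\<lambda>x. x"] idC y by blast
    moreover have "h y \<in> S" using h y unfolding qhom_def by simp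
    ultimately show ?thesis by simp
  qed
  have xT: "qmul C x T = x \<and> qmul C T x = x \<and> qle C x T" if x: "x \<in> qcar C" for x
  proof -
    obtain A where A: "A \<subseteq> M" "qSup C A = x" using S_eq[OF allS[OF x]] by blast
    have Ac: "A \<subseteq> qcar C" using A Mcar by blast
    have AZ: "\<And>t. t \<in> A \<Longrightarrow> qmul C t T = t \<and> qmul C T t = t \<and> qle C t T" using A MZ unfolding Z_def by blast
    have e1: "(\<lambda>b. qmul C b T) ` A = A" using AZ by (force simp: image_iff)
    have e2: "(\<lambda>b. qmul C T b) ` A = A" using AZ by (force simp: image_iff)
    have 1: "qmul C x T = x" using mul_SupL[OF qQ T_in Ac] e1 A(2) by simp
    have 2: "qmul C T x = x" using mul_SupR[OF qQ T_in Ac] e2 A(2) by simp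
    have "qle C (qSup C A) T" by (rule Sup_least[OF cl Ac T_in]) (use AZ in blast)
    then show ?thesis using 1 2 A(2) by simp
  qed
  have xx: "qle C x (qmul C x x)" if x: "x \<in> qcar C" for x
  proof -
    obtain A where A: "A \<subseteq> M" "qSup C A = x" using S_eq[OF allS[OF x]] by blast
    have Ac: "A \<subseteq> qcar C" using A Mcar by blast
    have "qle C (qSup C A) (qmul C x x)"
    proof (rule Sup_least[OF cl Ac m[OF x x]])
      fix t assume t: "t \<in> A"
      have tc: "t \<in> qcar C" using t Ac by blast
      have tx: "qle C t x" using Sup_upper[OF cl Ac t] A(2) by simp
      have "qle C (qmul C t t) (qmul C x x)" using mul_mono[OF qQ tc x tc x tx tx] .
      then show "qle C t (qmul C x x)" using Midem t A(1) by auto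
    qed
    then show ?thesis using A(2) by simp
  qed
  have meet: "qinf C x y = qmul C x y" if x: "x \<in> qcar C" and y: "y \<in> qcar C" for x y
    unfolding qinf_def
  proof (rule glb_eq[OF cl])
    have xy: "qmul C x y \<in> qcar C" using m x y by blast
    have 1: "qle C (qmul C x y) x" using mul_monoR[OF qQ x T_in y] xT[OF x] xT[OF y] by simp
    have 2: "qle C (qmul C x y) y" using mul_monoL[OF qQ x T_in y] xT[OF x] xT[OF y] by simp
    have 3: "qle C u (qmul C x y)" if u: "u \<in> qcar C" "qle C u x" "qle C u y" for u
    proof -
      have "qle C (qmul C u u) (qmul C x y)" using mul_mono[OF qQ u(1) x u(1) y u(2) u(3)] .
      then show ?thesis using cl_trans[OF cl u(1) m[OF u(1) u(1)] xy] xx[OF u(1)] by blast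
    qed
    show "is_glb C {x, y} (qmul C x y)" unfolding is_glb_def using xy 1 2 3 by blast
  qed
  show ?thesis
    unfolding is_locale_def
  proof (intro conjI ballI allI impI)
    show "complete_lattice_on C" by (rule cl)
    show "qmul C a b = qinf C a b" if "a \<in> qcar C" "b \<in> qcar C" for a b using meet that by simp
    show "qinv C a = a" if "a \<in> qcar C" for a using S_inv allS that by blast
    show "qinf C a (qSup C A) = qSup C ((\<lambda>b. qinf C a b) ` A)" if a: "a \<in> qcar C" and A: "A \<subseteq> qcar C" for a A
    proof -
      have "(\<lambda>b. qinf C a b) ` A = (\<lambda>b. qmul C a b) ` A" by (rule image_cong) (use meet a A in auto)
      then show ?thesis using meet[OF a Sup_in[OF cl A]] mul_SupR[OF qQ a A] by simp
    qed
    show "qone C = qtop C" if K: "K = UnitalInv"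
    proof -
      have Tq: "T = qone C" using K unfolding T_def by simp
      have "qle C (qtop C) T" using xT[OF top_in[OF cl]] by simp
      moreover have "qle C T (qtop C)" using le_top[OF cl T_in] .
      ultimately show ?thesis using cl_antisym[OF cl top_in[OF cl] T_in] Tq by simp
    qed
  qed
qed

end
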